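(* Let $\mathbb{M}^d$ and $\mathbb{H}^{d'}$ be compact two-point homogeneous spaces with associated parameters $\beta,\beta'$, and let $K$ be a real, continuous, isotropic and positive definite kernel on $\mathbb{M}^d\times\mathbb{H}^{d'}$ with isotropic part $K_i^{d,d'}$. If $r,\rho\in(-1,1)$, then the double series $\sum_{k,l=0}^\infty a_{k,l}(K_i^{d,d'})P_k^{(d-2)/2,\beta}(1)P_l^{(d'-2)/2,\beta'}(1)r^k\rho^l$ converges.
   Context: A compact two-point homogeneous space $\mathbb{M}^d$ of dimension $d$ is one of: the unit sphere $S^d$ ($d\ge 1$), $\mathbb{P}^d(\mathbb{R})$ ($d\ge 2$), $\mathbb{P}^d(\mathbb{C})$ ($d=4,6,\dots$), $\mathbb{P}^d(\mathbb{H})$ ($d=8,12,\dots$), or $\mathbb{P}^{16}(Cay)$; its associated parameter $\beta$ is respectively $(d-2)/2,-1/2,0,1,3$. Each space carries its geodesic distance $|xy|$, normalized so that all geodesics have length $2\pi$. $P_k^{\alpha,\beta}$ is the Jacobi polynomial of degree $k$, and $h_k^{\alpha,\beta}=\int_{-1}^1 (P_k^{\alpha,\beta})^2(1-t)^\alpha(1+t)^\beta dt$. A kernel $K$ on $\mathbb{M}^d\times\mathbb{H}^{d'}$ is isotropic if $K((x,w),(y,z))=K_i^{d,d'}(\cos(|xy|/2),\cos(|wz|/2))$ for a function $K_i^{d,d'}$ on $[-1,1]^2$; it is positive definite if symmetric and all matrices $[K(p_i,p_j)]$ for distinct points $p_1,\dots,p_n$ are nonnegative definite. The coefficients are $a_{k,l}(K_i^{d,d'})=\frac{1}{h_k^{(d-2)/2,\beta}h_l^{(d'-2)/2,\beta'}}\int_{[-1,1]^2}K_i^{d,d'}(t,s)P_k^{(d-2)/2,\beta}(t)P_l^{(d'-2)/2,\beta'}(s)(1-t)^{(d-2)/2}(1+t)^{\beta}(1-s)^{(d'-2)/2}(1+s)^{\beta'}dt\,ds$.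 *)

theory Defs
  imports "HOL-Analysis.Analysis"
begin

definition jacobi :: "nat \<Rightarrow> real \<Rightarrow> real \<Rightarrow> real \<Rightarrow> real" where
  "jacobi k a b x = (\<Sum>s\<le>k. ((real k + a) gchoose (k - s)) * ((real k + b) gchoose s)
       * ((x - 1) / 2) ^ s * ((x + 1) / 2) ^ (k - s))"

definition jacobi_h :: "nat \<Rightarrow> real \<Rightarrow> real \<Rightarrow> real" where
  "jacobi_h k a b = (LINT t:{-1..1}|lborel. (jacobi k a b t)\<^sup>2 * (1 - t) powr a * (1 + t) powr b)"

definition jacobi_coeff2 ::
  "real \<Rightarrow> real \<Rightarrow> real \<Rightarrow> real \<Rightarrow> (real \<Rightarrow> real \<Rightarrow> real) \<Rightarrow> nat \<Rightarrow> nat \<Rightarrow> real" where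
  "jacobi_coeff2 a b a' b' F k l =
     (1 / (jacobi_h k a b * jacobi_h l a' b')) *
     (LINT p:({-1..1} \<times> {-1..1})|lborel.
        F (fst p) (snd p) * jacobi k a b (fst p) * jacobi l a' b' (snd p)
        * (1 - fst p) powr a * (1 + fst p) powr b * (1 - snd p) powr a' * (1 + snd p) powr b')"

section \<open>Cayley--Dickson algebras (level 0,1,2,3 = R, C, H, O)\<close>

text \<open>Elements of level n are functions nat => real supported in {..<2^n}.\<close>
definition cd_lo :: "nat \<Rightarrow> (nat \<Rightarrow> real) \<Rightarrow> nat \<Rightarrow> real" where
  "cd_lo h a = (\<lambda>i. if i < h then a i else 0)"
definition cd_hi :: "nat \<Rightarrow> (nat \<Rightarrow> real) \<Rightarrow> nat \<Rightarrow> real" where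
  "cd_hi h a = (\<lambda>i. if i < h then a (i + h) else 0)"
definition cd_glue :: "nat \<Rightarrow> (nat \<Rightarrow> real) \<Rightarrow> (nat \<Rightarrow> real) \<Rightarrow> nat \<Rightarrow> real" where
  "cd_glue h p q = (\<lambda>i. if i < h then p i else if i < 2 * h then q (i - h) else 0)"

fun cd_conj :: "nat \<Rightarrow> (nat \<Rightarrow> real) \<Rightarrow> nat \<Rightarrow> real" where
  "cd_conj 0 a = (\<lambda>i. if i = 0 then a 0 else 0)"
| "cd_conj (Suc n) a = cd_glue (2 ^ n) (cd_conj n (cd_lo (2 ^ n) a)) (\<lambda>i. - cd_hi (2 ^ n) a i)"

fun cd_mult :: "nat \<Rightarrow> (nat \<Rightarrow> real) \<Rightarrow> (nat \<Rightarrow> real) \<Rightarrow> nat \<Rightarrow> real" where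
  "cd_mult 0 x y = (\<lambda>i. if i = 0 then x 0 * y 0 else 0)"
| "cd_mult (Suc n) x y =
     (let h = 2 ^ n; a = cd_lo h x; b = cd_hi h x; c = cd_lo h y; d = cd_hi h y in
      cd_glue h (\<lambda>i. cd_mult n a c i - cd_mult n (cd_conj n d) b i)
                (\<lambda>i. cd_mult n d a i + cd_mult n b (cd_conj n c) i))"

section \<open>Points: matrices with entries in a Cayley--Dickson algebra\<close>

type_synonym pt = "nat \<Rightarrow> nat \<Rightarrow> nat \<Rightarrow> real"

definition mat_mult :: "nat \<Rightarrow> nat \<Rightarrow> pt \<Rightarrow> pt \<Rightarrow> pt" where
  "mat_mult n N X Y = (\<lambda>i j l. \<Sum>k<N. cd_mult n (X i k) (Y k j) l)"

text \<open>Projective space P^m over the level-n algebra: trace-one idempotent Hermitian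
  (m+1)x(m+1) matrices (for octonions, m = 2: primitive idempotents of the Albert algebra).\<close>
definition proj_pts :: "nat \<Rightarrow> nat \<Rightarrow> pt set" where
  "proj_pts n m = {X. (\<forall>i j l. (m < i \<or> m < j \<or> 2 ^ n \<le> l) \<longrightarrow> X i j l = 0)
      \<and> (\<forall>i\<le>m. \<forall>j\<le>m. X j i = cd_conj n (X i j))
      \<and> mat_mult n (Suc m) X X = X
      \<and> (\<Sum>i\<le>m. X i i 0) = 1}"

text \<open>cos(|XY|/2) = 2 Re tr(XY) - 1 (= cos of twice the Fubini--Study angle).\<close>
definition proj_cos :: "nat \<Rightarrow> nat \<Rightarrow> pt \<Rightarrow> pt \<Rightarrow> real" where
  "proj_cos n m X Y = 2 * (\<Sum>i\<le>m. mat_mult n (Suc m) X Y i i 0) - 1"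

text \<open>Unit sphere S^d in R^(d+1), coordinates stored in the entries p i 0 0.\<close>
definition sph_pts :: "nat \<Rightarrow> pt set" where
  "sph_pts d = {p. (\<forall>i j l. (j \<noteq> 0 \<or> l \<noteq> 0 \<or> d < i) \<longrightarrow> p i j l = 0)
      \<and> (\<Sum>i\<le>d. (p i 0 0)\<^sup>2) = 1}"

definition sph_cos :: "nat \<Rightarrow> pt \<Rightarrow> pt \<Rightarrow> real" where
  "sph_cos d p q = (\<Sum>i\<le>d. p i 0 0 * q i 0 0)"

text \<open>The nat argument is the (real) dimension d.\<close>
datatype tph = Sph nat | RealP nat | CplxP nat | QuatP nat | CayP

fun tph_valid :: "tph \<Rightarrow> bool" where
  "tph_valid (Sph d) = (1 \<le> d)"
| "tph_valid (RealP d) = (2 \<le> d)"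
| "tph_valid (CplxP d) = (even d \<and> 4 \<le> d)"
| "tph_valid (QuatP d) = (4 dvd d \<and> 8 \<le> d)"
| "tph_valid CayP = True"

fun tph_dim :: "tph \<Rightarrow> nat" where
  "tph_dim (Sph d) = d" | "tph_dim (RealP d) = d" | "tph_dim (CplxP d) = d"
| "tph_dim (QuatP d) = d" | "tph_dim CayP = 16"

fun tph_beta :: "tph \<Rightarrow> real" where
  "tph_beta (Sph d) = (real d - 2) / 2" | "tph_beta (RealP d) = - 1 / 2"
| "tph_beta (CplxP d) = 0" | "tph_beta (QuatP d) = 1" | "tph_beta CayP = 3"

definition tph_alpha :: "tph \<Rightarrow> real" where
  "tph_alpha M = (real (tph_dim M) - 2) / 2"

fun tph_pts :: "tph \<Rightarrow> pt set" where
  "tph_pts (Sph d) = sph_pts d"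
| "tph_pts (RealP d) = proj_pts 0 d"
| "tph_pts (CplxP d) = proj_pts 1 (d div 2)"
| "tph_pts (QuatP d) = proj_pts 2 (d div 4)"
| "tph_pts CayP = proj_pts 3 2"

text \<open>tph_cos M x y = cos(|xy|/2), geodesics normalized to length 2 pi.\<close>
fun tph_cos :: "tph \<Rightarrow> pt \<Rightarrow> pt \<Rightarrow> real" where
  "tph_cos (Sph d) = sph_cos d"
| "tph_cos (RealP d) = proj_cos 0 d"
| "tph_cos (CplxP d) = proj_cos 1 (d div 2)"
| "tph_cos (QuatP d) = proj_cos 2 (d div 4)"
| "tph_cos CayP = proj_cos 3 2"

definition pos_def_kernel :: "'a set \<Rightarrow> ('a \<Rightarrow> 'a \<Rightarrow> real) \<Rightarrow> bool" where
  "pos_def_kernel X K \<longleftrightarrow>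
     (\<forall>p\<in>X. \<forall>q\<in>X. K p q = K q p) \<and>
     (\<forall>(n::nat) (p::nat \<Rightarrow> 'a) (c::nat \<Rightarrow> real).
        (\<forall>i<n. p i \<in> X) \<longrightarrow> inj_on p {..<n} \<longrightarrow>
        0 \<le> (\<Sum>i<n. \<Sum>j<n. c i * c j * K (p i) (p j)))"

end

theory Submission
  imports Defs "HOL-Analysis.Analysis"
begin

definition re :: "real \<Rightarrow> nat \<Rightarrow> real" where "re x = (\<lambda>i. if i = 0 then x else 0)"

lemma re0: "re 0 = (\<lambda>i. 0)" by (auto simp: re_def)

lemma cd_lo_re: "0 < h \<Longrightarrow> cd_lo h (re x) = re x"
  by (auto simp: cd_lo_def re_def)
lemma cd_hi_re: "0 < h \<Longrightarrow> cd_hi h (re x) = re 0"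
  by (auto simp: cd_hi_def re_def)

lemma cd_conj_re: "cd_conj n (re x) = re x"
proof (induction n arbitrary: x)
  case 0 then show ?case by (auto simp: re_def)
next
  case (Suc n)
  have h: "(0::nat) < 2 ^ n" by simp
  have m: "(\<lambda>i. - re 0 i) = re 0" by (auto simp: re_def)
  have "cd_conj (Suc n) (re x) = cd_glue (2 ^ n) (re x) (re 0)"
    using Suc h by (simp add: cd_lo_re cd_hi_re m)
  also have "\<dots> = re x" using h by (auto simp: cd_glue_def re_def fun_eq_iff)
  finally show ?case .
qed

lemma cd_mult_re: "cd_mult n (re x) (re y) = re (x * y)"
proof (induction n arbitrary: x y)
  case 0 then show ?case by (auto simp: re_def)
next
  case (Suc n)
  have h: "(0::nat) < 2 ^ n" by simp
  have "cd_mult (Suc n) (re x) (re y) = cd_glue (2 ^ n) (\<lambda>i. re (x*y) i - re (0*0) i) (\<lambda>i. re (0 * x) i + re (0 * y) i)"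
    using Suc h by (simp add: Let_def cd_lo_re cd_hi_re cd_conj_re)
  also have "\<dots> = re (x*y)" using h by (auto simp: cd_glue_def re_def fun_eq_iff)
  finally show ?case .
qed

lemma re_sum: "(\<Sum>k\<in>A. re (f k) l) = re (\<Sum>k\<in>A. f k) l"
  by (auto simp: re_def)

lemma mat_mult_re:
  "mat_mult n N (\<lambda>i j. re (A i j)) (\<lambda>i j. re (B i j)) = (\<lambda>i j. re (\<Sum>k<N. A i k * B k j))"
  by (simp add: mat_mult_def cd_mult_re re_sum)

definition vv :: "real \<Rightarrow> real \<Rightarrow> nat \<Rightarrow> real" where
  "vv c s i = (if i = 0 then c else if i = 1 then s else 0)"

definition XP :: "real \<Rightarrow> real \<Rightarrow> pt" where
  "XP c s = (\<lambda>i j. re (vv c s i * vv c s j))"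

lemma vv0[simp]: "vv c s 0 = c" and vv1[simp]: "vv c s (Suc 0) = s"
  by (simp_all add: vv_def)

lemma sum_vv: "1 \<le> m \<Longrightarrow> (\<Sum>k<Suc m. vv c s k * f k) = c * f 0 + s * f 1"
proof (induction m)
  case 0 then show ?case by simp
next
  case (Suc m)
  show ?case
  proof (cases "m = 0")
    case True then show ?thesis by (simp add: vv_def)
  next
    case False
    then have "(\<Sum>k<Suc (Suc m). vv c s k * f k) = (\<Sum>k<Suc m. vv c s k * f k)"
      by (simp add: vv_def)
    with Suc False show ?thesis by simp
  qed
qed

lemma sum_vv': "1 \<le> m \<Longrightarrow> (\<Sum>k\<le>m. vv c s k * f k) = c * f 0 + s * f 1"
  using sum_vv[of m c s f] by (simp add: lessThan_Suc_atMost)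

lemma XP_in:
  assumes "1 \<le> m" "c^2 + s^2 = 1"
  shows "XP c s \<in> proj_pts n m"
proof -
  have supp: "XP c s i j l = 0" if "m < i \<or> m < j \<or> 2 ^ n \<le> l" for i j l
  proof -
    have "(1::nat) \<le> 2 ^ n" by simp
    then show ?thesis using that assms(1) by (auto simp: XP_def re_def vv_def)
  qed
  have herm: "XP c s j i = cd_conj n (XP c s i j)" for i j
    by (simp add: XP_def cd_conj_re mult.commute)
  have idem: "mat_mult n (Suc m) (XP c s) (XP c s) = XP c s"
  proof -
    have "(\<Sum>k<Suc m. vv c s i * vv c s k * (vv c s k * vv c s j)) = vv c s i * vv c s j" for i j
    proof -
      have "(\<Sum>k<Suc m. vv c s i * vv c s k * (vv c s k * vv c s j))
          = (\<Sum>k<Suc m. vv c s k * (vv c s i * vv c s k * vv c s j))"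
        by (simp add: algebra_simps)
      also have "\<dots> = c * (vv c s i * c * vv c s j) + s * (vv c s i * s * vv c s j)"
        by (subst sum_vv[OF assms(1)]) simp
      also have "\<dots> = vv c s i * vv c s j * (c^2 + s^2)" by (simp add: algebra_simps power2_eq_square)
      finally show ?thesis using assms(2) by simp
    qed
    then show ?thesis unfolding XP_def mat_mult_re by simp
  qed
  have tr: "(\<Sum>i\<le>m. XP c s i i 0) = 1"
    using sum_vv'[OF assms(1), of c s "vv c s"] assms(2)
    by (simp add: XP_def re_def vv_def power2_eq_square)
  show ?thesis unfolding proj_pts_def using supp herm idem tr by blast
qed

lemma proj_cos_XP:
  assumes "1 \<le> m"
  shows "proj_cos n m (XP 1 0) (XP c s) = 2 * c^2 - 1"
proof -
  have "(\<Sum>i\<le>m. mat_mult n (Suc m) (XP 1 0) (XP c s) i i 0)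
      = (\<Sum>i\<le>m. vv 1 0 i * (\<Sum>k<Suc m. vv 1 0 k * (vv c s k * vv c s i)))"
    unfolding XP_def mat_mult_re by (simp add: re_def sum_distrib_left algebra_simps)
  also have "\<dots> = c^2"
    by (subst sum_vv'[OF assms], subst sum_vv[OF assms]) (simp add: power2_eq_square)
  finally show ?thesis by (simp add: proj_cos_def)
qed

lemma cont_vv: "continuous_on S f \<Longrightarrow> continuous_on S g \<Longrightarrow> continuous_on S (\<lambda>t. vv (f t) (g t) i)"
  by (cases "i = 0"; cases "i = 1") (simp_all add: vv_def)

lemma cont_re: "continuous_on S f \<Longrightarrow> continuous_on S (\<lambda>t. re (f t) l)"
  by (cases "l = 0") (simp_all add: re_def)

lemma cont_XP: "continuous_on S f \<Longrightarrow> continuous_on S g \<Longrightarrow> continuous_on S (\<lambda>t. XP (f t) (g t))"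
  unfolding XP_def
  by (intro continuous_on_coordinatewise_then_product cont_re continuous_intros cont_vv)

lemma proj_path:
  assumes "1 \<le> m"
  shows "\<exists>e y. e \<in> proj_pts n m \<and> continuous_on {-1..1} y \<and>
     (\<forall>t\<in>{-1..1}. y t \<in> proj_pts n m \<and> proj_cos n m e (y t) = t)"
proof (intro exI conjI ballI)
  show "XP 1 0 \<in> proj_pts n m" by (rule XP_in[OF assms]) simp
  show "continuous_on {-1..1} (\<lambda>t. XP (cos (arccos t / 2)) (sin (arccos t / 2)))"
    by (intro cont_XP continuous_intros continuous_on_arccos') auto
  fix t :: real assume t: "t \<in> {-1..1}"
  show "XP (cos (arccos t / 2)) (sin (arccos t / 2)) \<in> proj_pts n m"
    by (rule XP_in[OF assms]) simp
  have "2 * (cos (arccos t / 2))^2 - 1 = cos (2 * (arccos t / 2))"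
    by (simp only: cos_double_cos)
  also have "\<dots> = t" using t by simp
  finally show "proj_cos n m (XP 1 0) (XP (cos (arccos t / 2)) (sin (arccos t / 2))) = t"
    by (simp add: proj_cos_XP[OF assms])
qed

lemma cont_if: "continuous_on S f \<Longrightarrow> continuous_on S (\<lambda>t. if P then f t else 0)"
  by (cases P) auto

definition SP :: "real \<Rightarrow> real \<Rightarrow> pt" where
  "SP c s = (\<lambda>i j l. if j = 0 \<and> l = 0 then vv c s i else 0)"

lemma sph_path:
  assumes "1 \<le> d"
  shows "\<exists>e y. e \<in> sph_pts d \<and> continuous_on {-1..1} y \<and>
     (\<forall>t\<in>{-1..1}. y t \<in> sph_pts d \<and> sph_cos d e (y t) = t)"
proof (intro exI conjI ballI)
  have mem: "SP c s \<in> sph_pts d" if "c^2 + s^2 = 1" for c s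
  proof -
    have "(\<Sum>i\<le>d. (SP c s i 0 0)\<^sup>2) = 1"
      unfolding SP_def using sum_vv'[OF assms, of c s "vv c s"] that
      by (simp add: power2_eq_square)
    moreover have "SP c s i j l = 0" if "j \<noteq> 0 \<or> l \<noteq> 0 \<or> d < i" for i j l
      using that assms by (auto simp: SP_def vv_def)
    ultimately show ?thesis unfolding sph_pts_def by blast
  qed
  show "SP 1 0 \<in> sph_pts d" by (rule mem) simp
  show "continuous_on {-1..1} (\<lambda>t. SP t (sqrt (1 - t^2)))"
    unfolding SP_def
    by (intro continuous_on_coordinatewise_then_product cont_if continuous_intros cont_vv)
  fix t :: real assume t: "t \<in> {-1..1}"
  have "t^2 \<le> 1" using t by (auto simp add: abs_square_le_1)
  then show "SP t (sqrt (1 - t^2)) \<in> sph_pts d" by (intro mem) simp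
  show "sph_cos d (SP 1 0) (SP t (sqrt (1 - t^2))) = t"
    unfolding sph_cos_def SP_def by (simp only: if_True simp_thms, subst sum_vv'[OF assms]) simp
qed

lemma tph_path:
  assumes "tph_valid M"
  shows "\<exists>e y. e \<in> tph_pts M \<and> continuous_on {-1..1} y \<and>
     (\<forall>t\<in>{-1..1}. y t \<in> tph_pts M \<and> tph_cos M e (y t) = t)"
  using assms
proof (cases M)
  case (Sph d) then show ?thesis using assms sph_path[of d] by simp
next
  case (RealP d) then show ?thesis using assms proj_path[of d 0] by simp
next
  case (CplxP d)
  then have "1 \<le> d div 2" using assms by auto
  then show ?thesis using CplxP proj_path[of "d div 2" 1] by simp
next
  case (QuatP d)
  then have "1 \<le> d div 4" using assms by auto
  then show ?thesis using QuatP proj_path[of "d div 4" 2] by simp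
next
  case CayP then show ?thesis using proj_path[of 2 3] by simp
qed


lemma int_cos_nat:
  "integral {0..pi} (\<lambda>x. cos (real m * x)) = (if m = 0 then pi else 0)"
proof (cases "m = 0")
  case True then show ?thesis by simp
next
  case False
  have "((\<lambda>x. cos (real m * x)) has_integral (sin (real m * pi) / real m - sin (real m * 0) / real m)) {0..pi}"
  proof (rule fundamental_theorem_of_calculus)
    show "0 \<le> pi" by simp
    fix x assume "x \<in> {0..pi}"
    show "((\<lambda>x. sin (real m * x) / real m) has_vector_derivative cos (real m * x)) (at x within {0..pi})"
      using False by (auto intro!: derivative_eq_intros simp: has_real_derivative_iff_has_vector_derivative[symmetric])
  qed
  then show ?thesis using False by (simp add: integral_unique sin_npi)
qed

lemma cos_orth:
  "integral {0..pi} (\<lambda>x. cos (real j * x) * cos (real k * x)) =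
     (if j = k then (if j = 0 then pi else pi / 2) else 0)"
proof -
  define d where "d = (if k \<le> j then j - k else k - j)"
  have e: "cos (real j * x) * cos (real k * x) = cos (real d * x) / 2 + cos (real (j + k) * x) / 2" for x
  proof -
    have "cos (real j * x - real k * x) = cos (real d * x)"
    proof (cases "k \<le> j")
      case True then show ?thesis by (simp add: d_def of_nat_diff left_diff_distrib)
    next
      case False
      then have "real j * x - real k * x = - (real d * x)" by (simp add: d_def of_nat_diff algebra_simps)
      then show ?thesis by simp
    qed
    then show ?thesis by (simp add: cos_times_cos distrib_right add_divide_distrib)
  qed
  have "integral {0..pi} (\<lambda>x. cos (real j * x) * cos (real k * x))
      = integral {0..pi} (\<lambda>x. cos (real d * x)) / 2 + integral {0..pi} (\<lambda>x. cos (real (j + k) * x)) / 2"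
    unfolding e
    by (subst integral_add) (auto intro!: integrable_continuous_interval continuous_intros)
  also have "\<dots> = (if j = k then (if j = 0 then pi else pi / 2) else 0)"
    unfolding int_cos_nat by (auto simp: d_def)
  finally show ?thesis .
qed

lemma L2_lower:
  assumes g: "\<And>x. g x = (\<Sum>j\<le>n. c j * cos (real j * x))"
  shows "pi / 2 * (\<Sum>j\<le>n. (c j)^2) \<le> integral {0..pi} (\<lambda>x. (g x)^2)"
proof -
  have sq: "(g x)^2 = (\<Sum>j\<le>n. \<Sum>k\<le>n. c j * c k * (cos (real j * x) * cos (real k * x)))" for x
    unfolding g power2_eq_square sum_product by (simp add: algebra_simps)
  have int: "(\<lambda>x. c j * c k * (cos (real j * x) * cos (real k * x))) integrable_on {0..pi}" for j k
    by (auto intro!: integrable_continuous_interval continuous_intros)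
  have "integral {0..pi} (\<lambda>x. (g x)^2)
      = (\<Sum>j\<le>n. \<Sum>k\<le>n. c j * c k * integral {0..pi} (\<lambda>x. cos (real j * x) * cos (real k * x)))"
    unfolding sq
    by (subst integral_sum, simp, intro ballI integrable_sum, simp, rule int)
       (subst integral_sum, simp, intro ballI int, simp)
  also have "\<dots> = (\<Sum>j\<le>n. (c j)^2 * (if j = 0 then pi else pi / 2))"
  proof (rule sum.cong[OF refl])
    fix j assume j: "j \<in> {..n}"
    define E where "E = (if j = 0 then pi else pi / 2)"
    have "(\<Sum>k\<le>n. c j * c k * integral {0..pi} (\<lambda>x. cos (real j * x) * cos (real k * x)))
        = (\<Sum>k\<le>n. if k = j then c j * c j * E else 0)"
      unfolding cos_orth E_def by (rule sum.cong) auto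
    also have "\<dots> = (c j)^2 * E" using j by (simp add: power2_eq_square)
    finally show "(\<Sum>k\<le>n. c j * c k * integral {0..pi} (\<lambda>x. cos (real j * x) * cos (real k * x)))
        = (c j)^2 * (if j = 0 then pi else pi / 2)" by (simp add: E_def)
  qed
  also have "\<dots> \<ge> (\<Sum>j\<le>n. (c j)^2 * (pi / 2))"
    by (intro sum_mono mult_left_mono) auto
  moreover have "(\<Sum>j\<le>n. (c j)^2 * (pi / 2)) = pi / 2 * (\<Sum>j\<le>n. (c j)^2)"
    by (simp add: sum_distrib_left mult.commute)
  ultimately show ?thesis by linarith
qed

lemma nik1:
  assumes g: "\<And>x. g x = (\<Sum>j\<le>n. c j * cos (real j * x))"
  shows "(g x)^2 \<le> (2 * (real n + 1) / pi) * integral {0..pi} (\<lambda>x. (g x)^2)"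
proof -
  have "(g x)^2 \<le> (\<Sum>j\<le>n. (c j * cos (real j * x))^2) * real (card {..n})"
    unfolding g by (rule sum_squared_le_sum_of_squares)
  also have "\<dots> \<le> (\<Sum>j\<le>n. (c j)^2) * (real n + 1)"
  proof -
    have "(\<Sum>j\<le>n. (c j * cos (real j * x))^2) \<le> (\<Sum>j\<le>n. (c j)^2)"
    proof (intro sum_mono)
      fix j
      have "(cos (real j * x))^2 \<le> 1" by (simp add: abs_square_le_1)
      then show "(c j * cos (real j * x))^2 \<le> (c j)^2"
        by (simp add: power_mult_distrib mult_left_le)
    qed
    then show ?thesis by (intro mult_mono) (auto intro: sum_nonneg)
  qed
  also have "\<dots> \<le> (2 * (real n + 1) / pi) * (pi / 2 * (\<Sum>j\<le>n. (c j)^2))"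
    by (simp add: field_simps)
  also have "\<dots> \<le> (2 * (real n + 1) / pi) * integral {0..pi} (\<lambda>x. (g x)^2)"
    by (intro mult_left_mono L2_lower[OF g]) auto
  finally show ?thesis .
qed

definition cospoly :: "nat \<Rightarrow> (real \<Rightarrow> real) \<Rightarrow> bool" where
  "cospoly n g \<longleftrightarrow> (\<exists>c. \<forall>x. g x = (\<Sum>j\<le>n. c j * cos (real j * x)))"

lemma cospoly_cont: "cospoly n g \<Longrightarrow> continuous_on S g"
proof -
  assume "cospoly n g"
  then obtain c where c: "\<And>x. g x = (\<Sum>j\<le>n. c j * cos (real j * x))" unfolding cospoly_def by blast
  have "g = (\<lambda>x. \<Sum>j\<le>n. c j * cos (real j * x))" using c by auto
  then show ?thesis by (simp add: continuous_intros)
qed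

lemma nik2:
  assumes g: "cospoly n g"
    and \<delta>: "\<delta> = pi / (8 * (real n + 1))"
    and \<omega>c: "continuous_on {\<delta>..pi-\<delta>} \<omega>"
    and m: "0 < m" "\<And>x. x \<in> {\<delta>..pi-\<delta>} \<Longrightarrow> m \<le> \<omega> x"
  shows "(g x)^2 \<le> 4 * (real n + 1) / (pi * m) * integral {\<delta>..pi-\<delta>} (\<lambda>x. (g x)^2 * \<omega> x)"
proof -
  obtain c where c: "\<And>x. g x = (\<Sum>j\<le>n. c j * cos (real j * x))" using g unfolding cospoly_def by blast
  define S where "S = integral {0..pi} (\<lambda>x. (g x)^2)"
  define M where "M = 2 * (real n + 1) / pi * S"
  have gM: "(g y)^2 \<le> M" for y unfolding M_def S_def by (rule nik1[OF c])
  have gc: "continuous_on UNIV g" by (rule cospoly_cont[OF g])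
  have int: "(\<lambda>x. (g x)^2) integrable_on {a..b}" for a b
    by (intro integrable_continuous_interval continuous_intros continuous_on_subset[OF gc]) auto
  have d0: "0 < \<delta>" using \<delta> by simp
  have d1: "\<delta> \<le> pi / 8"
  proof -
    have "pi / (8 * (real n + 1)) \<le> pi / (8 * 1)"
      by (intro divide_left_mono mult_left_mono) auto
    then show ?thesis using \<delta> by simp
  qed
  have "S = integral {0..\<delta>} (\<lambda>x. (g x)^2) + integral {\<delta>..pi} (\<lambda>x. (g x)^2)"
    unfolding S_def using d0 d1 by (intro Henstock_Kurzweil_Integration.integral_combine[symmetric] int) auto
  also have "integral {\<delta>..pi} (\<lambda>x. (g x)^2) = integral {\<delta>..pi-\<delta>} (\<lambda>x. (g x)^2) + integral {pi-\<delta>..pi} (\<lambda>x. (g x)^2)"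
    using d0 d1 by (intro Henstock_Kurzweil_Integration.integral_combine[symmetric] int) auto
  finally have S3: "S = integral {0..\<delta>} (\<lambda>x. (g x)^2) + integral {\<delta>..pi-\<delta>} (\<lambda>x. (g x)^2) + integral {pi-\<delta>..pi} (\<lambda>x. (g x)^2)"
    by simp
  have e1: "integral {0..\<delta>} (\<lambda>x. (g x)^2) \<le> \<delta> * M"
  proof -
    have "integral {0..\<delta>} (\<lambda>x. (g x)^2) \<le> integral {0..\<delta>} (\<lambda>x. M)"
      by (intro integral_le int gM) auto
    then show ?thesis using d0 by simp
  qed
  have e2: "integral {pi-\<delta>..pi} (\<lambda>x. (g x)^2) \<le> \<delta> * M"
  proof -
    have "integral {pi-\<delta>..pi} (\<lambda>x. (g x)^2) \<le> integral {pi-\<delta>..pi} (\<lambda>x. M)"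
      by (intro integral_le int gM) auto
    then show ?thesis using d0 by simp
  qed
  have mid: "integral {\<delta>..pi-\<delta>} (\<lambda>x. (g x)^2) \<le> integral {\<delta>..pi-\<delta>} (\<lambda>x. (g x)^2 * \<omega> x) / m"
  proof -
    have "integral {\<delta>..pi-\<delta>} (\<lambda>x. (g x)^2) \<le> integral {\<delta>..pi-\<delta>} (\<lambda>x. (g x)^2 * \<omega> x / m)"
    proof (rule integral_le[OF int])
      show "(\<lambda>x. (g x)^2 * \<omega> x / m) integrable_on {\<delta>..pi-\<delta>}"
        by (intro integrable_continuous_interval continuous_intros continuous_on_subset[OF gc] \<omega>c) (use m in auto)
      fix x assume x: "x \<in> {\<delta>..pi-\<delta>}"
      have "(g x)^2 * 1 \<le> (g x)^2 * (\<omega> x / m)"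
        using m(1) m(2)[OF x] by (intro mult_left_mono) (auto simp: field_simps)
      then show "(g x)^2 \<le> (g x)^2 * \<omega> x / m" by simp
    qed
    also have "\<dots> = integral {\<delta>..pi-\<delta>} (\<lambda>x. (g x)^2 * \<omega> x) / m"
      by (simp add: integral_divide)
    finally show ?thesis .
  qed
  have "2 * \<delta> * M = S / 2"
  proof -
    have "pi * (real n + 1) \<noteq> 0" by simp
    then show ?thesis unfolding M_def \<delta> by (simp add: field_simps)
  qed
  then have "S \<le> 2 * (integral {\<delta>..pi-\<delta>} (\<lambda>x. (g x)^2 * \<omega> x) / m)"
    using S3 e1 e2 mid by linarith
  then have "M \<le> 2 * (real n + 1) / pi * (2 * (integral {\<delta>..pi-\<delta>} (\<lambda>x. (g x)^2 * \<omega> x) / m))"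
    unfolding M_def by (intro mult_left_mono) auto
  also have "\<dots> = 4 * (real n + 1) / (pi * m) * integral {\<delta>..pi-\<delta>} (\<lambda>x. (g x)^2 * \<omega> x)"
    by (simp add: field_simps)
  finally show ?thesis using gM[of x] by linarith
qed


lemma summable_pow_geom:
  fixes x :: real
  assumes "\<bar>x\<bar> < 1"
  shows "summable (\<lambda>n. real (Suc n) ^ N * x ^ n)"
  using assms
proof (induction N arbitrary: x)
  case 0 then show ?case by simp
next
  case (Suc N)
  have "summable (\<lambda>n. diffs (\<lambda>n. real n ^ N) n * x ^ n)"
  proof (rule termdiff_converges[of x 1])
    show "norm x < 1" using Suc.prems by simp
    fix y :: real assume y: "norm y < 1"
    show "summable (\<lambda>n. real n ^ N * y ^ n)"
    proof (rule summable_comparison_test')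
      show "summable (\<lambda>n. real (Suc n) ^ N * \<bar>y\<bar> ^ n)" using Suc.IH[of "\<bar>y\<bar>"] y by simp
      fix n :: nat assume "0 \<le> n"
      have "real n ^ N \<le> real (Suc n) ^ N" by (intro power_mono) auto
      then show "norm (real n ^ N * y ^ n) \<le> real (Suc n) ^ N * \<bar>y\<bar> ^ n"
        by (simp add: abs_mult power_abs mult_right_mono)
    qed
  qed
  then show ?case by (simp add: diffs_def)
qed

lemma summable_on_pow_geom:
  fixes q :: real
  assumes "0 \<le> q" "q < 1"
  shows "(\<lambda>n. real (Suc n) ^ N * q ^ n) summable_on UNIV"
  using summable_pow_geom[of q N] assms
  by (intro summable_nonneg_imp_summable_on) auto

lemma summable_on_prod_nonneg:
  fixes u v :: "nat \<Rightarrow> real"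
  assumes "u summable_on UNIV" "v summable_on UNIV" "\<And>k. 0 \<le> u k" "\<And>l. 0 \<le> v l"
  shows "(\<lambda>(k, l). u k * v l) summable_on UNIV"
proof -
  have "(\<lambda>(k, l). u k * v l) summable_on Sigma UNIV (\<lambda>_. UNIV)"
  proof (rule summable_on_SigmaI[where g = "\<lambda>k. u k * infsum v UNIV"])
    fix k :: nat
    show "((\<lambda>l. case (k, l) of (k, l) \<Rightarrow> u k * v l) has_sum u k * infsum v UNIV) UNIV"
      using has_sum_cmult_right[OF has_sum_infsum[OF assms(2)], of "u k"] by simp
    show "(\<lambda>k. u k * infsum v UNIV) summable_on UNIV"
      using summable_on_cmult_left[OF assms(1)] by simp
  next
    fix k l show "0 \<le> (case (k, l) of (k, l) \<Rightarrow> u k * v l)" using assms by simp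
  qed
  then show ?thesis by simp
qed


lemma cospoly_mono: "cospoly n g \<Longrightarrow> n \<le> m \<Longrightarrow> cospoly m g"
proof -
  assume g: "cospoly n g" and nm: "n \<le> m"
  obtain c where c: "\<And>x. g x = (\<Sum>j\<le>n. c j * cos (real j * x))" using g unfolding cospoly_def by blast
  have "g x = (\<Sum>j\<le>m. (if j \<le> n then c j else 0) * cos (real j * x))" for x
  proof -
    have "(\<Sum>j\<le>m. (if j \<le> n then c j else 0) * cos (real j * x))
        = (\<Sum>j\<le>m. if j \<le> n then c j * cos (real j * x) else 0)" by (rule sum.cong) auto
    also have "\<dots> = (\<Sum>j\<in>{j\<in>{..m}. j \<le> n}. c j * cos (real j * x))"
      by (rule sum.inter_filter[symmetric]) simp
    also have "{j\<in>{..m}. j \<le> n} = {..n}" using nm by auto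
    finally show ?thesis using c by simp
  qed
  then show ?thesis unfolding cospoly_def by (intro exI[of _ "\<lambda>j. if j \<le> n then c j else 0"]) blast
qed

lemma cospoly_add: "cospoly n f \<Longrightarrow> cospoly n g \<Longrightarrow> cospoly n (\<lambda>x. f x + g x)"
proof -
  assume "cospoly n f" "cospoly n g"
  then obtain c d where c: "\<And>x. f x = (\<Sum>j\<le>n. c j * cos (real j * x))"
    and d: "\<And>x. g x = (\<Sum>j\<le>n. d j * cos (real j * x))" unfolding cospoly_def by blast
  show ?thesis unfolding cospoly_def
    by (rule exI[of _ "\<lambda>j. c j + d j"]) (simp add: c d distrib_right sum.distrib)
qed

lemma cospoly_scale: "cospoly n f \<Longrightarrow> cospoly n (\<lambda>x. a * f x)"
proof -
  assume "cospoly n f"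
  then obtain c where c: "\<And>x. f x = (\<Sum>j\<le>n. c j * cos (real j * x))" unfolding cospoly_def by blast
  show ?thesis unfolding cospoly_def
    by (rule exI[of _ "\<lambda>j. a * c j"]) (simp add: c sum_distrib_left mult.assoc)
qed

lemma cospoly_zero: "cospoly n (\<lambda>x. 0)"
  unfolding cospoly_def by (auto intro!: exI[of _ "\<lambda>j. 0"])

lemma cospoly_sum: "finite A \<Longrightarrow> (\<And>i. i \<in> A \<Longrightarrow> cospoly n (f i)) \<Longrightarrow> cospoly n (\<lambda>x. \<Sum>i\<in>A. f i x)"
  by (induction A rule: finite_induct) (auto intro: cospoly_zero cospoly_add)

lemma cospoly_cosj: "cospoly j (\<lambda>x. cos (real j * x))"
  unfolding cospoly_def
proof (rule exI[of _ "\<lambda>i. if i = j then 1 else 0"], rule allI)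
  fix x
  have "(\<Sum>i\<le>j. (if i = j then 1 else 0) * cos (real i * x)) = (\<Sum>i\<le>j. if i = j then cos (real i * x) else 0)"
    by (rule sum.cong) auto
  then show "cos (real j * x) = (\<Sum>i\<le>j. (if i = j then 1 else 0) * cos (real i * x))" by simp
qed

lemma cospoly_const: "cospoly 0 (\<lambda>x. a)"
  unfolding cospoly_def by (rule exI[of _ "\<lambda>i. a"]) simp

lemma cospoly_cos_cosj: "cospoly (Suc j) (\<lambda>x. cos x * cos (real j * x))"
proof (cases j)
  case 0
  then show ?thesis using cospoly_cosj[of 1] by simp
next
  case (Suc i)
  have e: "cos x * cos (real j * x) = 1/2 * cos (real i * x) + 1/2 * cos (real (Suc j) * x)" for x
  proof -
    have "cos x * cos (real j * x) = (cos (x - real j * x) + cos (x + real j * x)) / 2"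
      by (rule cos_times_cos)
    also have "x - real j * x = - (real i * x)" using Suc by (simp add: algebra_simps)
    also have "x + real j * x = real (Suc j) * x" by (simp add: algebra_simps)
    finally show ?thesis by simp
  qed
  show ?thesis unfolding e
    by (intro cospoly_add cospoly_scale cospoly_cosj cospoly_mono[OF cospoly_cosj]) (use Suc in auto)
qed

lemma cospoly_mult_cos: "cospoly n g \<Longrightarrow> cospoly (Suc n) (\<lambda>x. cos x * g x)"
proof -
  assume g: "cospoly n g"
  obtain c where c: "\<And>x. g x = (\<Sum>j\<le>n. c j * cos (real j * x))" using g unfolding cospoly_def by blast
  have e: "cos x * g x = (\<Sum>j\<le>n. c j * (cos x * cos (real j * x)))" for x
    unfolding c by (simp add: sum_distrib_left algebra_simps)
  show ?thesis unfolding e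
    by (intro cospoly_sum cospoly_scale cospoly_mono[OF cospoly_cos_cosj]) auto
qed

lemma cospoly_lin: "cospoly n g \<Longrightarrow> cospoly (Suc n) (\<lambda>x. (a + b * cos x) * g x)"
proof -
  assume g: "cospoly n g"
  have e: "(a + b * cos x) * g x = a * g x + b * (cos x * g x)" for x by (simp add: algebra_simps)
  show ?thesis unfolding e
    by (intro cospoly_add cospoly_scale cospoly_mult_cos g cospoly_mono[OF g]) auto
qed

lemma cospoly_linpow: "cospoly n g \<Longrightarrow> cospoly (n + m) (\<lambda>x. (a + b * cos x)^m * g x)"
proof (induction m)
  case 0 then show ?case by simp
next
  case (Suc m)
  have "cospoly (Suc (n + m)) (\<lambda>x. (a + b * cos x) * ((a + b * cos x)^m * g x))"
    by (intro cospoly_lin Suc)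
  then show ?case by (simp add: algebra_simps)
qed

lemma jacobi_cospoly: "cospoly k (\<lambda>x. jacobi k a b (cos x))"
proof -
  have e: "jacobi k a b (cos x) = (\<Sum>s\<le>k. (((real k + a) gchoose (k - s)) * ((real k + b) gchoose s)) *
      ((-1/2 + 1/2 * cos x)^s * ((1/2 + 1/2 * cos x)^(k - s) * 1)))" for x
    unfolding jacobi_def by (intro sum.cong) (auto simp: field_simps)
  show ?thesis unfolding e
  proof (intro cospoly_sum cospoly_scale)
    fix s assume s: "s \<in> {..k}"
    have "cospoly ((0 + (k - s)) + s) (\<lambda>x. (-1/2 + 1/2 * cos x)^s * ((1/2 + 1/2 * cos x)^(k - s) * 1))"
      by (intro cospoly_linpow cospoly_const)
    then show "cospoly k (\<lambda>x. (-1/2 + 1/2 * cos x)^s * ((1/2 + 1/2 * cos x)^(k - s) * 1))"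
      using s by simp
  qed simp
qed


lemma powr_int_shift:
  assumes "b > -1"
  shows "set_integrable lborel {-1..1} (\<lambda>t::real. (1 + t) powr b)"
proof -
  have "(\<lambda>x. x powr b) integrable_on {0..2::real}"
    by (rule integrable_on_powr_from_0) (use assms in auto)
  hence "(\<lambda>x. x powr b) integrable_on (cbox 0 (2::real))" by simp
  from integrable_affinity[OF this, of 1 1]
  have "(\<lambda>t. (1 + t) powr b) integrable_on {-1..1::real}" by (simp add: add.commute)
  hence "(\<lambda>t. (1 + t) powr b) absolutely_integrable_on {-1..1::real}"
    by (subst absolutely_integrable_on_iff_nonneg) auto
  then show ?thesis unfolding set_integrable_def
    by (subst (asm) integrable_completion) auto
qed

lemma powr_int_shift':
  assumes "a > -1"
  shows "set_integrable lborel {-1..1} (\<lambda>t::real. (1 - t) powr a)"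
proof -
  have "(\<lambda>x. x powr a) integrable_on {0..2::real}"
    by (rule integrable_on_powr_from_0) (use assms in auto)
  hence "(\<lambda>x. x powr a) integrable_on (cbox 0 (2::real))" by simp
  from integrable_affinity[OF this, of "-1" 1]
  have "(\<lambda>t. (1 - t) powr a) integrable_on {-1..1::real}" by simp
  hence "(\<lambda>t. (1 - t) powr a) absolutely_integrable_on {-1..1::real}"
    by (subst absolutely_integrable_on_iff_nonneg) auto
  then show ?thesis unfolding set_integrable_def
    by (subst (asm) integrable_completion) auto
qed

lemma weight_int:
  assumes a: "a > -1" and b: "b > -1"
  shows "set_integrable lborel {-1..1} (\<lambda>t::real. (1 - t) powr a * (1 + t) powr b)"
proof -
  define D where "D = max 1 (2 powr b)"
  define D' where "D' = max 1 (2 powr a)"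
  have Db: "(1 + t) powr b \<le> D" if "t \<in> {0..1}" for t
  proof (cases "b \<ge> 0")
    case True
    then have "(1 + t) powr b \<le> 2 powr b" using that by (intro powr_mono2) auto
    then show ?thesis by (simp add: D_def)
  next
    case False
    then have "(1 + t) powr b \<le> 1 powr b" using that by (intro powr_mono2') auto
    then show ?thesis by (simp add: D_def)
  qed
  have Da: "(1 - t) powr a \<le> D'" if "t \<in> {-1..0}" for t
  proof (cases "a \<ge> 0")
    case True
    then have "(1 - t) powr a \<le> 2 powr a" using that by (intro powr_mono2) auto
    then show ?thesis by (simp add: D'_def)
  next
    case False
    then have "(1 - t) powr a \<le> 1 powr a" using that by (intro powr_mono2') auto
    then show ?thesis by (simp add: D'_def)
  qed
  have sum: "set_integrable lborel {-1..1} (\<lambda>t::real. D * (1 - t) powr a + D' * (1 + t) powr b)"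
    by (intro set_integral_add set_integrable_mult_right powr_int_shift powr_int_shift' a b)
  show ?thesis unfolding set_integrable_def
  proof (rule Bochner_Integration.integrable_bound[OF sum[unfolded set_integrable_def] _ AE_I2])
    fix t :: real
    have "(1 - t) powr a * (1 + t) powr b \<le> D * (1 - t) powr a + D' * (1 + t) powr b" if "t \<in> {-1..1}"
    proof (cases "t \<ge> 0")
      case True
      then have "(1 - t) powr a * (1 + t) powr b \<le> (1 - t) powr a * D"
        using that by (intro mult_left_mono Db) auto
      moreover have "0 \<le> D' * (1 + t) powr b" by (simp add: D'_def)
      ultimately show ?thesis by (simp add: mult.commute)
    next
      case False
      then have "(1 - t) powr a * (1 + t) powr b \<le> D' * (1 + t) powr b"
        using that by (intro mult_right_mono Da) auto
      moreover have "0 \<le> D * (1 - t) powr a" by (simp add: D_def)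
      ultimately show ?thesis by simp
    qed
    then show "norm (indicat_real {-1..1} t *\<^sub>R ((1 - t) powr a * (1 + t) powr b))
        \<le> norm (indicat_real {-1..1} t *\<^sub>R (D * (1 - t) powr a + D' * (1 + t) powr b))"
      by (auto simp: indicator_def D_def D'_def)
  qed (auto intro!: AE_I2 simp: indicator_def)
qed


lemma sin_lower:
  fixes x :: real
  assumes "0 \<le> x" "x \<le> 1"
  shows "x / 2 \<le> sin x"
proof -
  have "\<And>u. 0 \<le> u \<Longrightarrow> u \<le> x \<Longrightarrow> ((\<lambda>u. sin u - u / 2) has_real_derivative cos u - 1/2) (at u)"
    by (auto intro!: derivative_eq_intros)
  moreover have "0 \<le> cos u - 1/2" if "0 \<le> u" "u \<le> x" for u
  proof -
    have "cos (pi / 3) \<le> cos u"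
      using that assms pi_gt3 by (intro cos_monotone_0_pi_le) auto
    then show ?thesis by (simp add: cos_60)
  qed
  ultimately have "sin 0 - 0 / 2 \<le> sin x - x / 2"
    by (intro DERIV_nonneg_imp_nondecreasing[OF assms(1)]) blast
  then show ?thesis by simp
qed

lemma powr_lower:
  fixes L x a :: real
  assumes "0 < L" "L \<le> 1" "L \<le> x" "x \<le> 2"
  shows "(L / 2) powr \<bar>a\<bar> \<le> x powr a"
proof (cases "a \<ge> 0")
  case True
  have "(L / 2) powr a \<le> x powr a" using assms True by (intro powr_mono2) auto
  then show ?thesis using True by simp
next
  case False
  have "(L / 2) powr (-a) \<le> (1 / 2) powr (-a)" using assms False by (intro powr_mono2) auto
  also have "\<dots> = 2 powr a" by (simp add: powr_minus_divide powr_divide)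
  also have "\<dots> \<le> x powr a" using assms False by (intro powr_mono2') auto
  finally show ?thesis using False by simp
qed

lemma jac_weight_int:
  assumes "a > -1" "b > -1"
  shows "set_integrable lborel {-1..1} (\<lambda>t::real. (jacobi k a b t)\<^sup>2 * (1 - t) powr a * (1 + t) powr b)"
proof -
  have "continuous_on {-1..1} (\<lambda>t. (jacobi k a b t)\<^sup>2)"
    unfolding jacobi_def by (intro continuous_intros) auto
  then have "compact ((\<lambda>t. (jacobi k a b t)\<^sup>2) ` {-1..1})"
    by (intro compact_continuous_image) auto
  then obtain B where B: "\<And>t. t \<in> {-1..1} \<Longrightarrow> norm ((jacobi k a b t)\<^sup>2) \<le> B"
    using compact_imp_bounded bounded_iff by (metis image_eqI)
  have I: "set_integrable lborel {-1..1} (\<lambda>t::real. B * ((1 - t) powr a * (1 + t) powr b))"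
    by (intro set_integrable_mult_right weight_int assms)
  show ?thesis unfolding set_integrable_def
  proof (rule Bochner_Integration.integrable_bound[OF I[unfolded set_integrable_def] _ AE_I2])
    fix t :: real
    have "\<bar>(jacobi k a b t)\<^sup>2 * (1 - t) powr a * (1 + t) powr b\<bar> \<le> \<bar>B * ((1 - t) powr a * (1 + t) powr b)\<bar>"
      if "t \<in> {-1..1}"
    proof -
      have "\<bar>(jacobi k a b t)\<^sup>2 * (1 - t) powr a * (1 + t) powr b\<bar> = (jacobi k a b t)\<^sup>2 * ((1 - t) powr a * (1 + t) powr b)"
        by (simp add: abs_mult)
      also have "\<dots> \<le> B * ((1 - t) powr a * (1 + t) powr b)"
        using B[OF that] by (intro mult_right_mono) auto
      finally show ?thesis by simp
    qed
    then show "norm (indicat_real {-1..1} t *\<^sub>R ((jacobi k a b t)\<^sup>2 * (1 - t) powr a * (1 + t) powr b))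
        \<le> norm (indicat_real {-1..1} t *\<^sub>R (B * ((1 - t) powr a * (1 + t) powr b)))"
      by (auto simp: indicator_def)
  qed (auto intro!: AE_I2 simp: indicator_def jacobi_def)
qed

lemma nik_jac:
  assumes a: "a > -1" and b: "b > -1" and t: "t \<in> {-1..1}"
  shows "(jacobi k a b t)^2 \<le> 4 * (real k + 1) / (pi * ((pi / (8 * (real k + 1))) / 2 *
            ((pi / (8 * (real k + 1)))^2 / 16) powr (\<bar>a\<bar> + \<bar>b\<bar>))) * jacobi_h k a b"
proof -
  define \<delta> where "\<delta> = pi / (8 * (real k + 1))"
  define L where "L = \<delta>^2 / 8"
  define m where "m = \<delta> / 2 * (\<delta>^2 / 16) powr (\<bar>a\<bar> + \<bar>b\<bar>)"
  define g where "g = (\<lambda>x. jacobi k a b (cos x))"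
  define \<omega> where "\<omega> = (\<lambda>x. sin x * ((1 - cos x) powr a * (1 + cos x) powr b))"
  define F where "F = (\<lambda>t. (jacobi k a b t)\<^sup>2 * (1 - t) powr a * (1 + t) powr b)"
  define c where "c = cos \<delta>"
  have d0: "0 < \<delta>" unfolding \<delta>_def by simp
  have d1: "\<delta> \<le> pi / 8"
  proof -
    have "pi / (8 * (real k + 1)) \<le> pi / (8 * 1)"
      by (intro divide_left_mono mult_left_mono) auto
    then show ?thesis unfolding \<delta>_def by simp
  qed
  have d2: "\<delta> \<le> 1/2" using d1 pi_less_4 by linarith
  have sd: "\<delta> / 4 \<le> sin (\<delta> / 2)" using sin_lower[of "\<delta>/2"] d0 d2 by simp
  have c1: "L \<le> 1 - c"
  proof -
    have "c = 1 - 2 * (sin (\<delta> / 2))^2" unfolding c_def using cos_double_sin[of "\<delta>/2"] by simp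
    moreover have "(\<delta> / 4)^2 \<le> (sin (\<delta> / 2))^2" using sd d0 by (intro power_mono) auto
    ultimately show ?thesis unfolding L_def by (simp add: power2_eq_square field_simps)
  qed
  have L0: "0 < L" unfolding L_def using d0 by simp
  have L1: "L \<le> 1"
  proof -
    have "\<delta>^2 \<le> 1" using d0 d2 by (simp add: power_le_one)
    then show ?thesis unfolding L_def by simp
  qed
  have c0: "0 < c" unfolding c_def using d0 d1 pi_less_4 by (intro cos_gt_zero) auto
  have cb: "-c \<le> cos x \<and> cos x \<le> c" if "x \<in> {\<delta>..pi-\<delta>}" for x
  proof -
    have "cos x \<le> cos \<delta>" using that d0 by (intro cos_monotone_0_pi_le) auto
    moreover have "cos (pi - \<delta>) \<le> cos x" using that d0 by (intro cos_monotone_0_pi_le) auto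
    ultimately show ?thesis unfolding c_def by simp
  qed
  have sb: "\<delta> / 2 \<le> sin x" if "x \<in> {\<delta>..pi-\<delta>}" for x
  proof -
    have sdd: "\<delta> / 2 \<le> sin \<delta>" using sin_lower[of \<delta>] d0 d2 by simp
    show ?thesis
    proof (cases "x \<le> pi / 2")
      case True
      then have "sin \<delta> \<le> sin x" using that d0 by (intro sin_monotone_2pi_le) auto
      then show ?thesis using sdd by simp
    next
      case False
      then have "sin \<delta> \<le> sin (pi - x)" using that d0 by (intro sin_monotone_2pi_le) auto
      then show ?thesis using sdd by simp
    qed
  qed
  have \<omega>m: "m \<le> \<omega> x" if x: "x \<in> {\<delta>..pi-\<delta>}" for x
  proof -
    have p1: "(L / 2) powr \<bar>a\<bar> \<le> (1 - cos x) powr a"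
      using cb[OF x] c1 L0 L1 by (intro powr_lower) auto
    have p2: "(L / 2) powr \<bar>b\<bar> \<le> (1 + cos x) powr b"
      using cb[OF x] c1 L0 L1 by (intro powr_lower) auto
    have "m = \<delta> / 2 * ((L / 2) powr \<bar>a\<bar> * (L / 2) powr \<bar>b\<bar>)"
      unfolding m_def L_def by (simp add: powr_add)
    also have "\<dots> \<le> sin x * ((1 - cos x) powr a * (1 + cos x) powr b)"
      using sb[OF x] d0 p1 p2 by (intro mult_mono) auto
    finally show ?thesis unfolding \<omega>_def .
  qed
  have m0: "0 < m" unfolding m_def using d0 by simp
  have \<omega>c: "continuous_on {\<delta>..pi-\<delta>} \<omega>"
    unfolding \<omega>_def using cb c1 L0 by (intro continuous_intros) force+
  have main: "(g x)^2 \<le> 4 * (real k + 1) / (pi * m) * integral {\<delta>..pi-\<delta>} (\<lambda>x. (g x)^2 * \<omega> x)" for x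
    by (rule nik2[OF _ \<delta>_def \<omega>c m0 \<omega>m]) (simp add: g_def jacobi_cospoly)
  have Fc: "continuous_on {-c..c} F"
    unfolding F_def jacobi_def using c1 L0 by (intro continuous_intros) auto
  have sub: "((\<lambda>x. (- sin x) *\<^sub>R F (cos x)) has_integral
      (integral {cos \<delta>..cos (pi - \<delta>)} F - integral {cos (pi - \<delta>)..cos \<delta>} F)) {\<delta>..pi-\<delta>}"
  proof (rule has_integral_substitution_general[of "{}" \<delta> "pi - \<delta>" cos "-c" c])
    show "\<delta> \<le> pi - \<delta>" using d1 pi_gt3 by linarith
    show "cos ` {\<delta>..pi - \<delta>} \<subseteq> {- c..c}" using cb by auto
    show "continuous_on {\<delta>..pi - \<delta>} cos" by (intro continuous_intros)
    fix x show "(cos has_field_derivative - sin x) (at x within {\<delta>..pi - \<delta>})"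
      by (auto intro!: derivative_eq_intros)
  qed (use Fc in auto)
  have "integral {cos \<delta>..cos (pi - \<delta>)} F = 0" using c0 by (simp add: c_def[symmetric])
  then have sub2: "((\<lambda>x. (g x)^2 * \<omega> x) has_integral integral {-c..c} F) {\<delta>..pi-\<delta>}"
    using has_integral_neg[OF sub] by (simp add: c_def g_def \<omega>_def F_def algebra_simps)
  have Fi: "set_integrable lborel {-1..1} F" unfolding F_def by (rule jac_weight_int[OF a b])
  have "integral {-c..c} F \<le> integral {-1..1} F"
  proof (rule integral_subset_le)
    show "{-c..c} \<subseteq> {-1..1}" using c1 L0 c0 by auto
    show "F integrable_on {-c..c}"
      using set_integrable_subset[OF Fi, of "{-c..c}"] c1 L0 c0 set_borel_integral_eq_integral(1) by force
    show "F integrable_on {-1..1}" using set_borel_integral_eq_integral(1)[OF Fi] .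
    show "\<forall>x\<in>{-1..1}. 0 \<le> F x" unfolding F_def by auto
  qed
  also have "\<dots> = jacobi_h k a b"
    using set_borel_integral_eq_integral(2)[OF Fi] unfolding jacobi_h_def F_def by simp
  finally have hk: "integral {\<delta>..pi-\<delta>} (\<lambda>x. (g x)^2 * \<omega> x) \<le> jacobi_h k a b"
    using integral_unique[OF sub2] by simp
  have "(jacobi k a b t)^2 = (g (arccos t))^2" unfolding g_def using t by simp
  also have "\<dots> \<le> 4 * (real k + 1) / (pi * m) * integral {\<delta>..pi-\<delta>} (\<lambda>x. (g x)^2 * \<omega> x)" by (rule main)
  also have "\<dots> \<le> 4 * (real k + 1) / (pi * m) * jacobi_h k a b"
    using m0 by (intro mult_left_mono hk) auto
  finally show ?thesis unfolding m_def \<delta>_def .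
qed


lemma eb_L1: "1 \<le> (x::real) \<Longrightarrow> 0 < q \<Longrightarrow> 4 * x / (pi * ((pi / (8 * x)) / 2 * q)) = 64 * x^2 / (pi^2 * q)"
  by (simp add: field_simps power2_eq_square)
lemma eb_L2: "1 \<le> (x::real) \<Longrightarrow> (1 / (1024 * x^2)) powr c = 1 / (1024 powr c * x powr (2 * c))"
proof -
  assume x: "1 \<le> x"
  have x2: "x^2 = x powr 2" using x by (simp add: powr_realpow)
  have "(x^2) powr c = x powr (2 * c)" unfolding x2 by (simp add: powr_powr)
  moreover have "(1 / (1024 * x^2)) powr c = 1 / (1024 * x^2) powr c"
    using x by (simp add: powr_divide)
  moreover have "(1024 * x^2) powr c = 1024 powr c * (x^2) powr c"
    using x by (simp add: powr_mult)
  ultimately show ?thesis by simp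
qed
lemma eb_L3: "1 \<le> (x::real) \<Longrightarrow> 1 \<le> pi^2 \<Longrightarrow> 1 / (1024 * x^2) \<le> (pi / (8 * x))^2 / 16"
  by (simp add: field_simps power2_eq_square)
lemma eb_L4: "1 \<le> (x::real) \<Longrightarrow> 0 < q \<Longrightarrow> 1 / q \<le> A \<Longrightarrow> 64 * x^2 / q \<le> 64 * x^2 * A"
proof -
  assume x: "1 \<le> x" and q: "0 < q" and A: "1 / q \<le> A"
  have "64 * x^2 / q = 64 * x^2 * (1 / q)" by simp
  also have "\<dots> \<le> 64 * x^2 * A" using A by (intro mult_left_mono) auto
  finally show ?thesis .
qed
lemma eb_pi: "1 \<le> pi^2" using pi_gt3 by (smt (verit) one_le_power)

lemma eb_L5: "1 \<le> (x::real) \<Longrightarrow> 0 \<le> c \<Longrightarrow> x powr (2 * c) \<le> x ^ nat \<lceil>2 * c\<rceil>"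
proof -
  assume x: "1 \<le> x" and c: "0 \<le> c"
  have "2 * c \<le> real (nat \<lceil>2 * c\<rceil>)" by linarith
  then have "x powr (2 * c) \<le> x powr real (nat \<lceil>2 * c\<rceil>)" using x by (rule powr_mono)
  also have "\<dots> = x ^ nat \<lceil>2 * c\<rceil>" using x by (simp add: powr_realpow)
  finally show ?thesis .
qed

lemma E_bound:
  fixes c :: real and k :: nat
  assumes c: "0 \<le> c"
  shows "4 * (real k + 1) / (pi * ((pi / (8 * (real k + 1))) / 2 * ((pi / (8 * (real k + 1)))^2 / 16) powr c))
         \<le> 64 * 1024 powr c * real (Suc k) ^ (nat \<lceil>2 * c\<rceil> + 2)"
proof -
  define x where "x = real k + 1"
  define N where "N = nat \<lceil>2 * c\<rceil>"
  have x1: "1 \<le> x" unfolding x_def by simp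
  define q where "q = ((pi / (8 * x))^2 / 16) powr c"
  have q0: "0 < q" unfolding q_def using x1 by simp
  have A0: "0 < 1024 powr c * x ^ N" using x1 by simp
  have P0: "0 < 1024 powr c * x powr (2 * c)" using x1 by simp
  have "(1 / (1024 * x^2)) powr c \<le> q"
    unfolding q_def using x1 c eb_L3[OF x1 eb_pi] by (intro powr_mono2) auto
  then have q1: "1 / (1024 powr c * x powr (2 * c)) \<le> q" using eb_L2[OF x1] by simp
  have xN: "x powr (2 * c) \<le> x ^ N" unfolding N_def by (rule eb_L5[OF x1 c])
  have m1: "1024 powr c * x powr (2 * c) \<le> 1024 powr c * x ^ N"
    by (rule mult_left_mono[OF xN]) simp
  have "1 / (1024 powr c * x ^ N) \<le> 1 / (1024 powr c * x powr (2 * c))"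
    by (rule divide_left_mono[OF m1]) (simp, rule mult_pos_pos[OF A0 P0])
  then have qlow: "1 / (1024 powr c * x ^ N) \<le> q" by (rule order_trans[OF _ q1])
  have iq: "1 / q \<le> 1024 powr c * x ^ N"
  proof -
    have "1 / q \<le> 1 / (1 / (1024 powr c * x ^ N))"
      using qlow q0 A0 by (intro divide_left_mono) auto
    then show ?thesis by simp
  qed
  have "64 * x^2 / (pi^2 * q) \<le> 64 * x^2 / q"
    using q0 x1 eb_pi by (intro divide_left_mono) (auto intro: mult_pos_pos)
  also have "\<dots> \<le> 64 * x^2 * (1024 powr c * x ^ N)" by (rule eb_L4[OF x1 q0 iq])
  also have "\<dots> = 64 * 1024 powr c * x ^ (N + 2)" by (simp add: power_add power2_eq_square algebra_simps)
  finally have "4 * x / (pi * ((pi / (8 * x)) / 2 * q)) \<le> 64 * 1024 powr c * x ^ (N + 2)"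
    unfolding eb_L1[OF x1 q0] .
  then have main: "4 * x / (pi * ((pi / (8 * x)) / 2 * ((pi / (8 * x))^2 / 16) powr c)) \<le> 64 * 1024 powr c * x ^ (N + 2)"
    unfolding q_def .
  have xs: "real (Suc k) = real k + 1" by simp
  show ?thesis unfolding xs using main unfolding x_def N_def .
qed


lemma prod_integrable:
  fixes u v :: "real \<Rightarrow> real"
  assumes u: "integrable lborel u" and v: "integrable lborel v"
  shows "integrable lborel (\<lambda>x::real\<times>real. u (fst x) * v (snd x))"
    and "(\<integral>x. u (fst x) * v (snd x) \<partial>(lborel::(real\<times>real) measure)) = (\<integral>x. u x \<partial>lborel) * (\<integral>y. v y \<partial>lborel)"
proof -
  have [measurable]: "u \<in> borel_measurable lborel" "v \<in> borel_measurable lborel"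
    using u v by (auto intro: borel_measurable_integrable)
  have i: "integrable (lborel \<Otimes>\<^sub>M lborel) (\<lambda>(x, y). u x * v y)"
  proof (rule lborel_pair.Fubini_integrable)
    show "(\<lambda>(x, y). u x * v y) \<in> borel_measurable (lborel \<Otimes>\<^sub>M lborel)" by measurable
    have "(\<lambda>x. \<integral>y. norm (case (x, y) of (x, y) \<Rightarrow> u x * v y) \<partial>lborel) = (\<lambda>x. \<bar>u x\<bar> * (\<integral>y. \<bar>v y\<bar> \<partial>lborel))"
      by (simp add: abs_mult)
    moreover have "integrable lborel (\<lambda>x. \<bar>u x\<bar> * (\<integral>y. \<bar>v y\<bar> \<partial>lborel))"
      using u by (intro integrable_mult_left integrable_abs)
    ultimately show "integrable lborel (\<lambda>x. \<integral>y. norm (case (x, y) of (x, y) \<Rightarrow> u x * v y) \<partial>lborel)"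
      by simp
    show "AE x in lborel. integrable lborel (\<lambda>y. case (x, y) of (x, y) \<Rightarrow> u x * v y)"
      using v by (intro AE_I2) (simp add: integrable_mult_right)
  qed
  have e: "(\<lambda>(x, y). u x * v y) = (\<lambda>x::real\<times>real. u (fst x) * v (snd x))" by auto
  show "integrable lborel (\<lambda>x::real\<times>real. u (fst x) * v (snd x))"
    using i unfolding e lborel_prod .
  have "(\<integral>x. (\<integral>y. u x * v y \<partial>lborel) \<partial>lborel) = integral\<^sup>L (lborel \<Otimes>\<^sub>M lborel) (\<lambda>(x, y). u x * v y)"
    by (rule lborel_pair.integral_fst) (use i in simp)
  then have "integral\<^sup>L lborel (\<lambda>x::real\<times>real. u (fst x) * v (snd x)) = (\<integral>x. u x * (\<integral>y. v y \<partial>lborel) \<partial>lborel)"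
    unfolding e lborel_prod by simp
  also have "\<dots> = (\<integral>x. u x \<partial>lborel) * (\<integral>y. v y \<partial>lborel)" by simp
  finally show "(\<integral>x. u (fst x) * v (snd x) \<partial>(lborel::(real\<times>real) measure)) = (\<integral>x. u x \<partial>lborel) * (\<integral>y. v y \<partial>lborel)" .
qed

lemma dbl_bound:
  fixes Ki :: "real \<Rightarrow> real \<Rightarrow> real" and p q w w' :: "real \<Rightarrow> real"
  assumes K: "\<And>t s. t \<in> {-1..1} \<Longrightarrow> s \<in> {-1..1} \<Longrightarrow> \<bar>Ki t s\<bar> \<le> B"
    and P: "\<And>t. t \<in> {-1..1} \<Longrightarrow> \<bar>p t\<bar> \<le> Mp"
    and Q: "\<And>t. t \<in> {-1..1} \<Longrightarrow> \<bar>q t\<bar> \<le> Mq"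
    and w: "set_integrable lborel {-1..1} w" "\<And>t. t \<in> {-1..1} \<Longrightarrow> 0 \<le> w t"
    and w': "set_integrable lborel {-1..1} w'" "\<And>t. t \<in> {-1..1} \<Longrightarrow> 0 \<le> w' t"
  shows "\<bar>(LINT x:({-1..1} \<times> {-1..1})|lborel. Ki (fst x) (snd x) * p (fst x) * q (snd x) * w (fst x) * w' (snd x))\<bar>
          \<le> B * Mp * Mq * ((LINT t:{-1..1}|lborel. w t) * (LINT t:{-1..1}|lborel. w' t))"
proof -
  define S where "S = {-1..1::real}"
  have B0: "0 \<le> B" using K[of 0 0] by auto
  have P0: "0 \<le> Mp" using P[of 0] by auto
  have Q0: "0 \<le> Mq" using Q[of 0] by auto
  define u where "u = (\<lambda>x. indicator S x *\<^sub>R w x)"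
  define v where "v = (\<lambda>x. indicator S x *\<^sub>R w' x)"
  have ui: "integrable lborel u" using w(1) unfolding u_def S_def set_integrable_def .
  have vi: "integrable lborel v" using w'(1) unfolding v_def S_def set_integrable_def .
  have W0: "0 \<le> (LINT t:{-1..1}|lborel. w t)" unfolding set_lebesgue_integral_def using w(2) by (intro Bochner_Integration.integral_nonneg) (auto simp: indicator_def)
  have W0': "0 \<le> (LINT t:{-1..1}|lborel. w' t)" unfolding set_lebesgue_integral_def using w'(2) by (intro Bochner_Integration.integral_nonneg) (auto simp: indicator_def)
  define f where "f = (\<lambda>x::real\<times>real. indicator (S \<times> S) x *\<^sub>R
      (Ki (fst x) (snd x) * p (fst x) * q (snd x) * w (fst x) * w' (snd x)))"
  have lhs: "(LINT x:({-1..1} \<times> {-1..1})|lborel. Ki (fst x) (snd x) * p (fst x) * q (snd x) * w (fst x) * w' (snd x))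
     = integral\<^sup>L lborel f"
    unfolding f_def S_def set_lebesgue_integral_def ..
  show ?thesis
  proof (cases "integrable lborel f")
    case False
    then have "integral\<^sup>L lborel f = 0" by (rule not_integrable_integral_eq)
    then show ?thesis unfolding lhs using B0 P0 Q0 W0 W0' by simp
  next
    case True
    define G where "G = (\<lambda>x::real\<times>real. (B * Mp * Mq) * (u (fst x) * v (snd x)))"
    have Gi: "integrable lborel G" unfolding G_def
      by (intro integrable_mult_right prod_integrable(1) ui vi)
    have "\<bar>integral\<^sup>L lborel f\<bar> \<le> integral\<^sup>L lborel (\<lambda>x. norm (f x))"
      using integral_norm_bound[of lborel f] by simp
    also have "\<dots> \<le> integral\<^sup>L lborel G"
    proof (rule integral_mono)
      show "integrable lborel (\<lambda>x. norm (f x))" using True by (rule integrable_norm)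
      show "integrable lborel G" by (rule Gi)
      fix x :: "real \<times> real"
      show "norm (f x) \<le> G x"
      proof (cases "x \<in> S \<times> S")
        case True
        then have x1: "fst x \<in> {-1..1}" and x2: "snd x \<in> {-1..1}" unfolding S_def by auto
        have "norm (f x) = \<bar>Ki (fst x) (snd x)\<bar> * \<bar>p (fst x)\<bar> * \<bar>q (snd x)\<bar> * (w (fst x) * w' (snd x))"
          using True w(2)[OF x1] w'(2)[OF x2] by (simp add: f_def abs_mult)
        also have "\<dots> \<le> B * Mp * Mq * (w (fst x) * w' (snd x))"
          using K[OF x1 x2] P[OF x1] Q[OF x2] w(2)[OF x1] w'(2)[OF x2] B0 P0 Q0
          by (intro mult_right_mono mult_mono) auto
        also have "\<dots> = G x" using x1 x2 by (simp add: G_def u_def v_def indicator_def S_def)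
        finally show ?thesis .
      next
        case False
        then have "f x = 0" by (simp add: f_def)
        moreover have "0 \<le> G x"
          unfolding G_def u_def v_def using w(2) w'(2) B0 P0 Q0
          by (auto simp: indicator_def S_def intro!: mult_nonneg_nonneg)
        ultimately show ?thesis by simp
      qed
    qed
    also have "\<dots> = B * Mp * Mq * ((\<integral>x. u x \<partial>lborel) * (\<integral>y. v y \<partial>lborel))"
      unfolding G_def by (simp add: prod_integrable(2)[OF ui vi])
    also have "\<dots> = B * Mp * Mq * ((LINT t:{-1..1}|lborel. w t) * (LINT t:{-1..1}|lborel. w' t))"
      unfolding u_def v_def S_def set_lebesgue_integral_def ..
    finally show ?thesis unfolding lhs .
  qed
qed


lemma tph_ab: "tph_valid M \<Longrightarrow> -1 < tph_alpha M \<and> -1 < tph_beta M"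
  by (cases M) (auto simp: tph_alpha_def)

lemma Ki_bound:
  fixes M H :: tph and K :: "pt \<times> pt \<Rightarrow> pt \<times> pt \<Rightarrow> real" and Ki :: "real \<Rightarrow> real \<Rightarrow> real"
  assumes vM: "tph_valid M" and vH: "tph_valid H"
    and Kc: "continuous_on ((tph_pts M \<times> tph_pts H) \<times> (tph_pts M \<times> tph_pts H)) (\<lambda>(p, q). K p q)"
    and Kr: "\<forall>x\<in>tph_pts M. \<forall>y\<in>tph_pts M. \<forall>w\<in>tph_pts H. \<forall>z\<in>tph_pts H.
           K (x, w) (y, z) = Ki (tph_cos M x y) (tph_cos H w z)"
  shows "\<exists>B. \<forall>t\<in>{-1..1}. \<forall>s\<in>{-1..1}. \<bar>Ki t s\<bar> \<le> B"
proof -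
  obtain e y where e: "e \<in> tph_pts M" and yc: "continuous_on {-1..1} y"
    and y: "\<And>t. t \<in> {-1..1} \<Longrightarrow> y t \<in> tph_pts M \<and> tph_cos M e (y t) = t"
    using tph_path[OF vM] by blast
  obtain e' z where e': "e' \<in> tph_pts H" and zc: "continuous_on {-1..1} z"
    and z: "\<And>t. t \<in> {-1..1} \<Longrightarrow> z t \<in> tph_pts H \<and> tph_cos H e' (z t) = t"
    using tph_path[OF vH] by blast
  define Q where "Q = ({-1..1} \<times> {-1..1} :: (real \<times> real) set)"
  define \<Phi> where "\<Phi> = (\<lambda>x::real\<times>real. ((e, e'), (y (fst x), z (snd x))))"
  have c1: "continuous_on Q (\<lambda>x. y (fst x))"
    by (rule continuous_on_compose2[OF yc continuous_on_fst[OF continuous_on_id]]) (auto simp: Q_def)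
  have c2: "continuous_on Q (\<lambda>x. z (snd x))"
    by (rule continuous_on_compose2[OF zc continuous_on_snd[OF continuous_on_id]]) (auto simp: Q_def)
  have \<Phi>c: "continuous_on Q \<Phi>" unfolding \<Phi>_def by (intro continuous_intros c1 c2)
  have \<Phi>s: "\<Phi> ` Q \<subseteq> (tph_pts M \<times> tph_pts H) \<times> (tph_pts M \<times> tph_pts H)"
    using e e' y z by (auto simp: \<Phi>_def Q_def)
  have Gc: "continuous_on Q (\<lambda>x. (\<lambda>(p, q). K p q) (\<Phi> x))"
    by (rule continuous_on_compose2[OF Kc \<Phi>c \<Phi>s])
  have "compact ((\<lambda>x. (\<lambda>(p, q). K p q) (\<Phi> x)) ` Q)"
    by (intro compact_continuous_image Gc) (auto simp: Q_def compact_Times)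
  then obtain B where B: "\<And>x. x \<in> Q \<Longrightarrow> norm ((\<lambda>(p, q). K p q) (\<Phi> x)) \<le> B"
    using compact_imp_bounded bounded_iff by (metis image_eqI)
  have "\<bar>Ki t s\<bar> \<le> B" if t: "t \<in> {-1..1}" and s: "s \<in> {-1..1}" for t s
  proof -
    have "K (e, e') (y t, z s) = Ki t s"
      using Kr e e' y[OF t] z[OF s] by auto
    moreover have "norm ((\<lambda>(p, q). K p q) (\<Phi> (t, s))) \<le> B" using t s by (intro B) (auto simp: Q_def)
    ultimately show ?thesis by (simp add: \<Phi>_def)
  qed
  then show ?thesis by blast
qed

lemma jac_E:
  assumes a: "a > -1" and b: "b > -1" and t: "t \<in> {-1..1}"
  shows "(jacobi k a b t)^2 \<le> (64 * 1024 powr (\<bar>a\<bar> + \<bar>b\<bar>) * real (Suc k) ^ (nat \<lceil>2 * (\<bar>a\<bar> + \<bar>b\<bar>)\<rceil> + 2)) * jacobi_h k a b"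
proof -
  have h0: "0 \<le> jacobi_h k a b"
    unfolding jacobi_h_def set_lebesgue_integral_def
    by (intro Bochner_Integration.integral_nonneg) (auto simp: indicator_def)
  show ?thesis
    using order_trans[OF nik_jac[OF a b t, of k] mult_right_mono[OF E_bound[of "\<bar>a\<bar> + \<bar>b\<bar>" k] h0]] by simp
qed

lemma jac_h0: "0 \<le> jacobi_h k a b"
  unfolding jacobi_h_def set_lebesgue_integral_def
  by (intro Bochner_Integration.integral_nonneg) (auto simp: indicator_def)

lemma abs_le_sqrt_of_sq: "x^2 \<le> y \<Longrightarrow> \<bar>x\<bar> \<le> sqrt y"
  using real_sqrt_le_mono[of "x^2" y] by simp

lemma term_bound:
  fixes Ki :: "real \<Rightarrow> real \<Rightarrow> real"
  assumes K: "\<And>t s. t \<in> {-1..1} \<Longrightarrow> s \<in> {-1..1} \<Longrightarrow> \<bar>Ki t s\<bar> \<le> B"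
    and a: "a > -1" "b > -1" and a': "a' > -1" "b' > -1"
    and E: "\<And>t. t \<in> {-1..1} \<Longrightarrow> (jacobi k a b t)^2 \<le> Ek * jacobi_h k a b" "0 \<le> Ek"
    and E': "\<And>t. t \<in> {-1..1} \<Longrightarrow> (jacobi l a' b' t)^2 \<le> El * jacobi_h l a' b'" "0 \<le> El"
  shows "\<bar>jacobi_coeff2 a b a' b' Ki k l * jacobi k a b 1 * jacobi l a' b' 1 * r ^ k * \<rho> ^ l\<bar>
      \<le> B * ((LINT t:{-1..1}|lborel. (1 - t) powr a * (1 + t) powr b) * (LINT t:{-1..1}|lborel. (1 - t) powr a' * (1 + t) powr b'))
         * (Ek * El) * (\<bar>r\<bar> ^ k * \<bar>\<rho>\<bar> ^ l)"
proof -
  define hk where "hk = jacobi_h k a b"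
  define hl where "hl = jacobi_h l a' b'"
  define W where "W = (LINT t:{-1..1}|lborel. (1 - t) powr a * (1 + t) powr b)"
  define W' where "W' = (LINT t:{-1..1}|lborel. (1 - t) powr a' * (1 + t) powr b')"
  have B0: "0 \<le> B" using K[of 0 0] by auto
  have W0: "0 \<le> W" unfolding W_def set_lebesgue_integral_def
    by (intro Bochner_Integration.integral_nonneg) (auto simp: indicator_def)
  have W0': "0 \<le> W'" unfolding W'_def set_lebesgue_integral_def
    by (intro Bochner_Integration.integral_nonneg) (auto simp: indicator_def)
  have R0: "0 \<le> B * (W * W') * (Ek * El) * (\<bar>r\<bar> ^ k * \<bar>\<rho>\<bar> ^ l)"
    using B0 W0 W0' E(2) E'(2) by simp
  define I where "I = (LINT p:({-1..1} \<times> {-1..1})|lborel.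
        Ki (fst p) (snd p) * jacobi k a b (fst p) * jacobi l a' b' (snd p)
        * (1 - fst p) powr a * (1 + fst p) powr b * (1 - snd p) powr a' * (1 + snd p) powr b')"
  have coeff: "jacobi_coeff2 a b a' b' Ki k l = I / (hk * hl)"
    unfolding jacobi_coeff2_def I_def hk_def hl_def by simp
  show ?thesis
  proof (cases "hk = 0 \<or> hl = 0")
    case True
    then show ?thesis using R0 unfolding coeff W_def[symmetric] W'_def[symmetric] by auto
  next
    case False
    have hk0: "0 < hk" using False jac_h0[of k a b] unfolding hk_def by linarith
    have hl0: "0 < hl" using False jac_h0[of l a' b'] unfolding hl_def by linarith
    define Mk where "Mk = sqrt (Ek * hk)"
    define Ml where "Ml = sqrt (El * hl)"
    have Pk: "\<bar>jacobi k a b t\<bar> \<le> Mk" if "t \<in> {-1..1}" for t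
      unfolding Mk_def hk_def by (rule abs_le_sqrt_of_sq[OF E(1)[OF that]])
    have Pl: "\<bar>jacobi l a' b' t\<bar> \<le> Ml" if "t \<in> {-1..1}" for t
      unfolding Ml_def hl_def by (rule abs_le_sqrt_of_sq[OF E'(1)[OF that]])
    have Ekh: "0 \<le> Ek * hk" using E(2) hk0 by simp
    have Elh: "0 \<le> El * hl" using E'(2) hl0 by simp
    have Mk0: "0 \<le> Mk" and Ml0: "0 \<le> Ml" unfolding Mk_def Ml_def using Ekh Elh by simp_all
    from Ekh have Mk2: "Mk * Mk = Ek * hk" unfolding Mk_def by simp
    from Elh have Ml2: "Ml * Ml = El * hl" unfolding Ml_def by simp
    have Ib: "\<bar>I\<bar> \<le> B * Mk * Ml * (W * W')"
    proof -
      have "I = (LINT x:({-1..1} \<times> {-1..1})|lborel. Ki (fst x) (snd x) * jacobi k a b (fst x) * jacobi l a' b' (snd x)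
            * ((1 - fst x) powr a * (1 + fst x) powr b) * ((1 - snd x) powr a' * (1 + snd x) powr b'))"
        unfolding I_def by (simp add: mult.assoc)
      also have "\<bar>\<dots>\<bar> \<le> B * Mk * Ml * (W * W')"
        unfolding W_def W'_def
        by (rule dbl_bound[where w = "\<lambda>t. (1 - t) powr a * (1 + t) powr b" and w' = "\<lambda>t. (1 - t) powr a' * (1 + t) powr b'"])
           (auto intro: K Pk Pl weight_int a a')
      finally show ?thesis .
    qed
    have "\<bar>jacobi_coeff2 a b a' b' Ki k l * jacobi k a b 1 * jacobi l a' b' 1 * r ^ k * \<rho> ^ l\<bar>
        = \<bar>I\<bar> / (hk * hl) * \<bar>jacobi k a b 1\<bar> * \<bar>jacobi l a' b' 1\<bar> * (\<bar>r\<bar> ^ k * \<bar>\<rho>\<bar> ^ l)"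
      unfolding coeff using hk0 hl0 by (simp add: abs_mult power_abs abs_divide)
    also have "\<dots> \<le> (B * Mk * Ml * (W * W')) / (hk * hl) * Mk * Ml * (\<bar>r\<bar> ^ k * \<bar>\<rho>\<bar> ^ l)"
      using Ib Pk[of 1] Pl[of 1] hk0 hl0 Mk0 Ml0 B0 W0 W0'
      by (intro mult_mono divide_right_mono) auto
    also have "\<dots> = B * (W * W') * ((Mk * Mk) / hk) * ((Ml * Ml) / hl) * (\<bar>r\<bar> ^ k * \<bar>\<rho>\<bar> ^ l)"
      by (simp add: field_simps)
    also have "\<dots> = B * (W * W') * (Ek * El) * (\<bar>r\<bar> ^ k * \<bar>\<rho>\<bar> ^ l)"
      unfolding Mk2 Ml2 using hk0 hl0 by simp
    finally show ?thesis unfolding W_def W'_def .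
  qed
qed

theorem lemma2p5:
  fixes M H :: tph and K :: "pt \<times> pt \<Rightarrow> pt \<times> pt \<Rightarrow> real"
    and Ki :: "real \<Rightarrow> real \<Rightarrow> real" and r \<rho> :: real
  assumes "tph_valid M" and "tph_valid H"
    and "continuous_on ((tph_pts M \<times> tph_pts H) \<times> (tph_pts M \<times> tph_pts H))
           (\<lambda>(p, q). K p q)"
    and "\<forall>x\<in>tph_pts M. \<forall>y\<in>tph_pts M. \<forall>w\<in>tph_pts H. \<forall>z\<in>tph_pts H.
           K (x, w) (y, z) = Ki (tph_cos M x y) (tph_cos H w z)"
    and "pos_def_kernel (tph_pts M \<times> tph_pts H) K"
    and "r \<in> {-1<..<1}" and "\<rho> \<in> {-1<..<1}"
  shows "(\<lambda>(k, l). jacobi_coeff2 (tph_alpha M) (tph_beta M) (tph_alpha H) (tph_beta H) Ki k l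
            * jacobi k (tph_alpha M) (tph_beta M) 1 * jacobi l (tph_alpha H) (tph_beta H) 1
            * r ^ k * \<rho> ^ l) summable_on UNIV"
proof -
  define a where "a = tph_alpha M"
  define b where "b = tph_beta M"
  define a' where "a' = tph_alpha H"
  define b' where "b' = tph_beta H"
  have ab: "a > -1" "b > -1" using tph_ab[OF assms(1)] unfolding a_def b_def by auto
  have ab': "a' > -1" "b' > -1" using tph_ab[OF assms(2)] unfolding a'_def b'_def by auto
  obtain B where B: "\<And>t s. t \<in> {-1..1} \<Longrightarrow> s \<in> {-1..1} \<Longrightarrow> \<bar>Ki t s\<bar> \<le> B"
    using Ki_bound[OF assms(1-4)] by blast
  have B0: "0 \<le> B" using B[of 0 0] by auto
  define C where "C = 64 * 1024 powr (\<bar>a\<bar> + \<bar>b\<bar>)"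
  define N where "N = nat \<lceil>2 * (\<bar>a\<bar> + \<bar>b\<bar>)\<rceil> + 2"
  define C' where "C' = 64 * 1024 powr (\<bar>a'\<bar> + \<bar>b'\<bar>)"
  define N' where "N' = nat \<lceil>2 * (\<bar>a'\<bar> + \<bar>b'\<bar>)\<rceil> + 2"
  define W where "W = (LINT t:{-1..1}|lborel. (1 - t) powr a * (1 + t) powr b)"
  define W' where "W' = (LINT t:{-1..1}|lborel. (1 - t) powr a' * (1 + t) powr b')"
  have W0: "0 \<le> W" unfolding W_def set_lebesgue_integral_def
    by (intro Bochner_Integration.integral_nonneg) (auto simp: indicator_def)
  have W0': "0 \<le> W'" unfolding W'_def set_lebesgue_integral_def
    by (intro Bochner_Integration.integral_nonneg) (auto simp: indicator_def)
  define u where "u = (\<lambda>k. C * real (Suc k) ^ N * \<bar>r\<bar> ^ k)"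
  define v where "v = (\<lambda>l. C' * real (Suc l) ^ N' * \<bar>\<rho>\<bar> ^ l)"
  have r1: "\<bar>r\<bar> < 1" and p1: "\<bar>\<rho>\<bar> < 1" using assms(6,7) by auto
  have us: "u summable_on UNIV" unfolding u_def
    using summable_on_cmult_right[OF summable_on_pow_geom[of "\<bar>r\<bar>" N]] r1 by (simp add: mult.assoc)
  have vs: "v summable_on UNIV" unfolding v_def
    using summable_on_cmult_right[OF summable_on_pow_geom[of "\<bar>\<rho>\<bar>" N']] p1 by (simp add: mult.assoc)
  have uv: "(\<lambda>(k, l). u k * v l) summable_on UNIV"
    by (rule summable_on_prod_nonneg[OF us vs]) (auto simp: u_def v_def C_def C'_def)
  have g: "(\<lambda>x. B * (W * W') * (case x of (k, l) \<Rightarrow> u k * v l)) summable_on UNIV"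
    by (rule summable_on_cmult_right[OF uv])
  have "(\<lambda>x. norm ((\<lambda>(k, l). jacobi_coeff2 a b a' b' Ki k l * jacobi k a b 1 * jacobi l a' b' 1 * r ^ k * \<rho> ^ l) x))
        summable_on UNIV"
  proof (rule Infinite_Sum.abs_summable_on_comparison_test'[OF g])
    fix x :: "nat \<times> nat"
    obtain k l where x: "x = (k, l)" by force
    have "\<bar>jacobi_coeff2 a b a' b' Ki k l * jacobi k a b 1 * jacobi l a' b' 1 * r ^ k * \<rho> ^ l\<bar>
        \<le> B * (W * W') * ((C * real (Suc k) ^ N) * (C' * real (Suc l) ^ N')) * (\<bar>r\<bar> ^ k * \<bar>\<rho>\<bar> ^ l)"
      unfolding W_def W'_def
    proof (rule term_bound[OF B ab ab'])
      fix t :: real assume "t \<in> {-1..1}"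
      then show "(jacobi k a b t)^2 \<le> C * real (Suc k) ^ N * jacobi_h k a b"
        unfolding C_def N_def by (rule jac_E[OF ab])
    next
      fix t :: real assume "t \<in> {-1..1}"
      then show "(jacobi l a' b' t)^2 \<le> C' * real (Suc l) ^ N' * jacobi_h l a' b'"
        unfolding C'_def N'_def by (rule jac_E[OF ab'])
    qed (auto simp: C_def C'_def)
    also have "\<dots> = B * (W * W') * (u k * v l)" unfolding u_def v_def by (simp only: mult_ac)
    finally show "norm (case x of (k, l) \<Rightarrow> jacobi_coeff2 a b a' b' Ki k l * jacobi k a b 1 * jacobi l a' b' 1 * r ^ k * \<rho> ^ l)
        \<le> B * (W * W') * (case x of (k, l) \<Rightarrow> u k * v l)" unfolding x prod.case real_norm_def .
  qed
  then have "(\<lambda>(k, l). jacobi_coeff2 a b a' b' Ki k l * jacobi k a b 1 * jacobi l a' b' 1 * r ^ k * \<rho> ^ l) summable_on UNIV"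
    by (rule abs_summable_summable)
  then show ?thesis unfolding a_def b_def a'_def b'_def .
qed

end
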